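(* Let $H\in\mathbb{R}^{n\times n}$ and $M\in\mathbb{R}^{m\times m}$ be symmetric positive semidefinite, $A\in\mathbb{R}^{m\times n}$, $b\in\mathbb{R}^m$, $c,q,r\in\mathbb{R}^n$. Assume $(x,y,z)$ satisfies $Hx+c-A^Ty-z=0$ and $Ax+My-b=0$. Let $l$ be an index and $\mathcal{B},\mathcal{N}$ index sets such that $\mathcal{B}$, $\{l\}$, $\mathcal{N}$ are pairwise disjoint with union $\{1,\dots,n\}$, and $x_{\mathcal{N}}+q_{\mathcal{N}}=0$, $z_{\mathcal{B}}+r_{\mathcal{B}}=0$. If $(\Delta x,\Delta y,\Delta z)$ satisfies $H\Delta x-A^T\Delta y-\Delta z=0$, $A\Delta x+M\Delta y=0$, $\Delta x_{\mathcal{N}}=0$, $\Delta z_{\mathcal{B}}=0$, then for all $\alpha\in\mathbb{R}$ the functions \[ f_P(x,y)=\tfrac12x^THx+\tfrac12y^TMy+c^Tx+r^Tx,\qquad f_D(x,y,z)=-\tfrac12x^THx-\tfrac12y^TMy+b^Ty-q^Tz \] satisfy \[ f_P(x+\alpha\Delta x,y+\alpha\Delta y)=f_P(x,y)+\Delta x_l(z_l+r_l)\alpha+\tfrac12\Delta x_l\Delta z_l\alpha^2, \] \[ f_D(x+\alpha\Delta x,y+\alpha\Delta y,z+\alpha\Delta z)=f_D(x,y,z)-\Delta z_l(x_l+q_l)\alpha-\tfrac12\Delta x_l\Delta z_l\alpha^2. \]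
   Context: For an index set $S$ and a vector $w$, $w_S$ denotes the subvector of components of $w$ with indices in $S$. *)

theory Defs
  imports "HOL-Analysis.Analysis"
begin

definition sym_psd :: "real^'n^'n \<Rightarrow> bool" where
  "sym_psd H \<longleftrightarrow> transpose H = H \<and> (\<forall>v. 0 \<le> v \<bullet> (H *v v))"

definition f_P :: "real^'n^'n \<Rightarrow> real^'m^'m \<Rightarrow> real^'n \<Rightarrow> real^'n \<Rightarrow> real^'n \<Rightarrow> real^'m \<Rightarrow> real" where
  "f_P H M c r x y = (1/2) * (x \<bullet> (H *v x)) + (1/2) * (y \<bullet> (M *v y)) + c \<bullet> x + r \<bullet> x"

definition f_D :: "real^'n^'n \<Rightarrow> real^'m^'m \<Rightarrow> real^'m \<Rightarrow> real^'n \<Rightarrow> real^'n \<Rightarrow> real^'m \<Rightarrow> real^'n \<Rightarrow> real" where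
  "f_D H M b q x y z = - (1/2) * (x \<bullet> (H *v x)) - (1/2) * (y \<bullet> (M *v y)) + b \<bullet> y - q \<bullet> z"

end

theory Submission
  imports Defs
begin

lemma tr_inner: fixes A :: "real^'n^'m"
  shows "u \<bullet> (transpose A *v v) = (A *v u) \<bullet> v"
  unfolding inner_vec_def matrix_vector_mult_def transpose_def
  by (simp add: sum_distrib_left sum_distrib_right mult_ac) (rule sum.swap)

lemma tr_inner2: fixes A :: "real^'n^'m"
  shows "u \<bullet> (v v* A) = (A *v u) \<bullet> v"
  using tr_inner[of u A v] by simp

lemma sym_inner: fixes H :: "real^'n^'n"
  assumes "transpose H = H" shows "u \<bullet> (H *v v) = v \<bullet> (H *v u)"
  by (metis assms tr_inner inner_commute)

lemma inner_single: fixes u w :: "real^'n"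
  assumes "\<And>i. i \<noteq> l \<Longrightarrow> u $ i * w $ i = 0"
  shows "u \<bullet> w = u $ l * w $ l"
proof -
  have "u \<bullet> w = (\<Sum>i\<in>UNIV. u $ i * w $ i)" by (simp add: inner_vec_def)
  also have "\<dots> = u $ l * w $ l + (\<Sum>i\<in>UNIV - {l}. u $ i * w $ i)"
    by (simp add: sum.remove)
  also have "(\<Sum>i\<in>UNIV - {l}. u $ i * w $ i) = 0" using assms by (intro sum.neutral) auto
  finally show ?thesis by simp
qed

theorem proposition11:
  fixes H :: "real^'n^'n" and M :: "real^'m^'m" and A :: "real^'n^'m"
    and b :: "real^'m" and c q r x z dx dz :: "real^'n" and y dy :: "real^'m"
    and l :: 'n and B N :: "'n set"
  assumes "sym_psd H" and "sym_psd M"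
    and "H *v x + c - transpose A *v y - z = 0"
    and "A *v x + M *v y - b = 0"
    and "l \<notin> B" and "l \<notin> N" and "B \<inter> N = {}" and "B \<union> {l} \<union> N = UNIV"
    and "\<forall>i\<in>N. x $ i + q $ i = 0"
    and "\<forall>i\<in>B. z $ i + r $ i = 0"
    and "H *v dx - transpose A *v dy - dz = 0"
    and "A *v dx + M *v dy = 0"
    and "\<forall>i\<in>N. dx $ i = 0"
    and "\<forall>i\<in>B. dz $ i = 0"
  shows "\<forall>\<alpha>::real.
      f_P H M c r (x + \<alpha> *\<^sub>R dx) (y + \<alpha> *\<^sub>R dy)
        = f_P H M c r x y + dx $ l * (z $ l + r $ l) * \<alpha> + (1/2) * dx $ l * dz $ l * \<alpha>^2
    \<and> f_D H M b q (x + \<alpha> *\<^sub>R dx) (y + \<alpha> *\<^sub>R dy) (z + \<alpha> *\<^sub>R dz)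
        = f_D H M b q x y z - dz $ l * (x $ l + q $ l) * \<alpha> - (1/2) * dx $ l * dz $ l * \<alpha>^2"
proof
  fix a :: real
  have sH: "transpose H = H" and sM: "transpose M = M" using assms(1,2) by (auto simp: sym_psd_def)
  have e1: "H *v x + c = transpose A *v y + z" using assms(3) by (simp add: algebra_simps)
  have e2: "b = A *v x + M *v y" using assms(4) by (simp add: algebra_simps)
  have e3: "H *v dx = transpose A *v dy + dz" using assms(11) by (simp add: algebra_simps)
  have e4: "A *v dx = - (M *v dy)" using assms(12) by (metis add.commute add_eq_0_iff)
  have cover: "\<And>i. i \<noteq> l \<Longrightarrow> i \<in> B \<or> i \<in> N" using assms(8) by auto
  have q1: "dx \<bullet> dz = dx $ l * dz $ l"
    by (rule inner_single) (use cover assms(13,14) in auto)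
  have "dx \<bullet> (z + r) = dx $ l * (z + r) $ l"
    by (rule inner_single) (use cover assms(13,10) in auto)
  then have q2: "dx \<bullet> (z + r) = dx $ l * (z $ l + r $ l)" by simp
  have "(x + q) \<bullet> dz = (x + q) $ l * dz $ l"
    by (rule inner_single) (use cover assms(9,14) in auto)
  then have q3: "(x + q) \<bullet> dz = (x $ l + q $ l) * dz $ l" by simp
  have xy: "x \<bullet> (H *v dx) = dx \<bullet> (H *v x)" "y \<bullet> (M *v dy) = dy \<bullet> (M *v y)"
    using sH sM sym_inner by blast+
  have quad: "dx \<bullet> (H *v dx) + dy \<bullet> (M *v dy) = dx \<bullet> dz"
  proof -
    have "dx \<bullet> (H *v dx) = (A *v dx) \<bullet> dy + dx \<bullet> dz" by (simp add: e3 inner_add_right tr_inner tr_inner2)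
    then show ?thesis by (simp add: e4 inner_commute)
  qed
  have linP: "dx \<bullet> (H *v x) + dy \<bullet> (M *v y) + c \<bullet> dx + r \<bullet> dx = dx \<bullet> (z + r)"
  proof -
    have "dx \<bullet> (H *v x) + c \<bullet> dx = dx \<bullet> (H *v x + c)" by (simp add: inner_add_right inner_commute)
    also have "\<dots> = (A *v dx) \<bullet> y + dx \<bullet> z" by (simp add: e1 inner_add_right tr_inner tr_inner2)
    finally show ?thesis using xy(2)
      by (simp add: e4 inner_add_right inner_commute)
  qed
  have linD: "- (dx \<bullet> (H *v x)) - dy \<bullet> (M *v y) + b \<bullet> dy - q \<bullet> dz = - ((x + q) \<bullet> dz)"
  proof -
    have "b \<bullet> dy = (A *v x) \<bullet> dy + (M *v y) \<bullet> dy" by (simp add: e2 inner_add_left)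
    also have "(A *v x) \<bullet> dy = x \<bullet> (transpose A *v dy)" by (simp add: tr_inner tr_inner2)
    also have "transpose A *v dy = H *v dx - dz" using e3 by simp
    finally show ?thesis using xy(1)
      by (simp add: inner_diff_right inner_add_left inner_add_right inner_commute)
  qed
  show "f_P H M c r (x + a *\<^sub>R dx) (y + a *\<^sub>R dy)
        = f_P H M c r x y + dx $ l * (z $ l + r $ l) * a + (1/2) * dx $ l * dz $ l * a^2
    \<and> f_D H M b q (x + a *\<^sub>R dx) (y + a *\<^sub>R dy) (z + a *\<^sub>R dz)
        = f_D H M b q x y z - dz $ l * (x $ l + q $ l) * a - (1/2) * dx $ l * dz $ l * a^2"
  proof
    have "f_P H M c r (x + a *\<^sub>R dx) (y + a *\<^sub>R dy) = f_P H M c r x y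
       + a * (dx \<bullet> (H *v x) + dy \<bullet> (M *v y) + c \<bullet> dx + r \<bullet> dx)
       + a^2/2 * (dx \<bullet> (H *v dx) + dy \<bullet> (M *v dy))"
      unfolding f_P_def using xy
      by (simp add: matrix_vector_right_distrib matrix_vector_mult_scaleR inner_add_left
          inner_add_right power2_eq_square algebra_simps)
    then show "f_P H M c r (x + a *\<^sub>R dx) (y + a *\<^sub>R dy)
        = f_P H M c r x y + dx $ l * (z $ l + r $ l) * a + (1/2) * dx $ l * dz $ l * a^2"
      by (simp only: linP quad q1 q2) (simp add: algebra_simps)
    have "f_D H M b q (x + a *\<^sub>R dx) (y + a *\<^sub>R dy) (z + a *\<^sub>R dz) = f_D H M b q x y z
       + a * (- (dx \<bullet> (H *v x)) - dy \<bullet> (M *v y) + b \<bullet> dy - q \<bullet> dz)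
       - a^2/2 * (dx \<bullet> (H *v dx) + dy \<bullet> (M *v dy))"
      unfolding f_D_def using xy
      by (simp add: matrix_vector_right_distrib matrix_vector_mult_scaleR inner_add_left
          inner_add_right inner_diff_left power2_eq_square algebra_simps)
    then show "f_D H M b q (x + a *\<^sub>R dx) (y + a *\<^sub>R dy) (z + a *\<^sub>R dz)
        = f_D H M b q x y z - dz $ l * (x $ l + q $ l) * a - (1/2) * dx $ l * dz $ l * a^2"
      by (simp only: linD quad q1 q3) (simp add: algebra_simps)
  qed
qed

end
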